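(* Let $\mathcal{G}$ be an effective ample groupoid. (1) If $|\operatorname{Orb}_{\mathcal{G}}(x)|\ge2$ for every $x\in\mathcal{G}^{(0)}$, then $\llbracket\mathcal{G}\rrbracket$ covers $\mathcal{G}$. (2) If $|\operatorname{Orb}_{\mathcal{G}}(x)|\ge3$ for every $x\in\mathcal{G}^{(0)}$, then $\mathsf{D}(\llbracket\mathcal{G}\rrbracket)$ covers $\mathcal{G}$.
   Context: Étale groupoid: range map $r(g)=gg^{-1}$ (and source $s(g)=g^{-1}g$) a local homeomorphism; ample: étale with $\mathcal{G}^{(0)}$ Hausdorff having a basis of compact open sets; effective: interior of $\{g:s(g)=r(g)\}$ equals $\mathcal{G}^{(0)}$. $\operatorname{Orb}_{\mathcal{G}}(x)=\{r(g):s(g)=x\}$. A full bisection is an open $U\subseteq\mathcal{G}$ with $s|_U,r|_U$ injective and $s(U)=r(U)=\mathcal{G}^{(0)}$; $\pi_U=r|_U\circ(s|_U)^{-1}$. $\llbracket\mathcal{G}\rrbracket$ is the group of all $\pi_U$ for full bisections $U$ with compact support (closure of moved points); $\mathsf{D}(\llbracket\mathcal{G}\rrbracket)$ its commutator subgroup. A subgroup $\Gamma\le\llbracket\mathcal{G}\rrbracket$ covers $\mathcal{G}$ if for every $g\in\mathcal{G}$ there is a full bisection $U$ with $g\in U$ and $\pi_U\in\Gamma$. *)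

theory Defs
  imports "HOL-Analysis.Analysis" "HOL-Algebra.Generated_Groups"
begin

text \<open>A groupoid is given by its set of arrows G, a multiplication m (meaningful on
composable pairs) and an inversion i.\<close>

definition gsrc :: "('g \<Rightarrow> 'g \<Rightarrow> 'g) \<Rightarrow> ('g \<Rightarrow> 'g) \<Rightarrow> 'g \<Rightarrow> 'g" where
  "gsrc m i g = m (i g) g"

definition grng :: "('g \<Rightarrow> 'g \<Rightarrow> 'g) \<Rightarrow> ('g \<Rightarrow> 'g) \<Rightarrow> 'g \<Rightarrow> 'g" where
  "grng m i g = m g (i g)"

definition units :: "'g set \<Rightarrow> ('g \<Rightarrow> 'g \<Rightarrow> 'g) \<Rightarrow> ('g \<Rightarrow> 'g) \<Rightarrow> 'g set" where
  "units G m i = grng m i ` G"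

definition composable :: "'g set \<Rightarrow> ('g \<Rightarrow> 'g \<Rightarrow> 'g) \<Rightarrow> ('g \<Rightarrow> 'g) \<Rightarrow> ('g \<times> 'g) set" where
  "composable G m i = {(g, h). g \<in> G \<and> h \<in> G \<and> gsrc m i g = grng m i h}"

definition groupoid :: "'g set \<Rightarrow> ('g \<Rightarrow> 'g \<Rightarrow> 'g) \<Rightarrow> ('g \<Rightarrow> 'g) \<Rightarrow> bool" where
  "groupoid G m i \<longleftrightarrow>
     (\<forall>g\<in>G. i g \<in> G \<and> i (i g) = g) \<and>
     (\<forall>g\<in>G. \<forall>h\<in>G. gsrc m i g = grng m i h \<longrightarrow>
        m g h \<in> G \<and> gsrc m i (m g h) = gsrc m i h \<and> grng m i (m g h) = grng m i g \<and>
        m (i g) (m g h) = h \<and> m (m g h) (i h) = g) \<and>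
     (\<forall>g\<in>G. \<forall>h\<in>G. \<forall>k\<in>G. gsrc m i g = grng m i h \<and> gsrc m i h = grng m i k \<longrightarrow>
        m (m g h) k = m g (m h k))"

definition top_groupoid :: "'g topology \<Rightarrow> 'g set \<Rightarrow> ('g \<Rightarrow> 'g \<Rightarrow> 'g) \<Rightarrow> ('g \<Rightarrow> 'g) \<Rightarrow> bool" where
  "top_groupoid T G m i \<longleftrightarrow> groupoid G m i \<and> topspace T = G \<and>
     continuous_map (subtopology (prod_topology T T) (composable G m i)) T (\<lambda>(g, h). m g h) \<and>
     continuous_map T T i"

definition etale :: "'g topology \<Rightarrow> 'g set \<Rightarrow> ('g \<Rightarrow> 'g \<Rightarrow> 'g) \<Rightarrow> ('g \<Rightarrow> 'g) \<Rightarrow> bool" where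
  "etale T G m i \<longleftrightarrow> top_groupoid T G m i \<and>
     (\<forall>g\<in>G. \<exists>U. openin T U \<and> g \<in> U \<and>
        openin (subtopology T (units G m i)) (grng m i ` U) \<and>
        homeomorphic_map (subtopology T U) (subtopology T (grng m i ` U)) (grng m i))"

definition ample :: "'g topology \<Rightarrow> 'g set \<Rightarrow> ('g \<Rightarrow> 'g \<Rightarrow> 'g) \<Rightarrow> ('g \<Rightarrow> 'g) \<Rightarrow> bool" where
  "ample T G m i \<longleftrightarrow> etale T G m i \<and>
     Hausdorff_space (subtopology T (units G m i)) \<and>
     (\<forall>W x. openin (subtopology T (units G m i)) W \<and> x \<in> W \<longrightarrow>
        (\<exists>K. openin (subtopology T (units G m i)) K \<and> compactin T K \<and> x \<in> K \<and> K \<subseteq> W))"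

definition effective :: "'g topology \<Rightarrow> 'g set \<Rightarrow> ('g \<Rightarrow> 'g \<Rightarrow> 'g) \<Rightarrow> ('g \<Rightarrow> 'g) \<Rightarrow> bool" where
  "effective T G m i \<longleftrightarrow>
     T interior_of {g \<in> G. gsrc m i g = grng m i g} = units G m i"

definition orbit :: "'g set \<Rightarrow> ('g \<Rightarrow> 'g \<Rightarrow> 'g) \<Rightarrow> ('g \<Rightarrow> 'g) \<Rightarrow> 'g \<Rightarrow> 'g set" where
  "orbit G m i x = {grng m i g | g. g \<in> G \<and> gsrc m i g = x}"

definition card_ge :: "'a set \<Rightarrow> nat \<Rightarrow> bool" where
  "card_ge A n \<longleftrightarrow> infinite A \<or> n \<le> card A"

definition full_bisection :: "'g topology \<Rightarrow> 'g set \<Rightarrow> ('g \<Rightarrow> 'g \<Rightarrow> 'g) \<Rightarrow> ('g \<Rightarrow> 'g) \<Rightarrow> 'g set \<Rightarrow> bool" where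
  "full_bisection T G m i U \<longleftrightarrow> openin T U \<and> U \<subseteq> G \<and>
     inj_on (gsrc m i) U \<and> inj_on (grng m i) U \<and>
     gsrc m i ` U = units G m i \<and> grng m i ` U = units G m i"

text \<open>pi_U = r|_U o (s|_U)^-1 on the unit space, extended by the identity outside it
(so that these maps form a group of permutations under composition).\<close>

definition bisect_map :: "'g set \<Rightarrow> ('g \<Rightarrow> 'g \<Rightarrow> 'g) \<Rightarrow> ('g \<Rightarrow> 'g) \<Rightarrow> 'g set \<Rightarrow> 'g \<Rightarrow> 'g" where
  "bisect_map G m i U x =
     (if x \<in> units G m i then grng m i (THE g. g \<in> U \<and> gsrc m i g = x) else x)"

definition compact_support :: "'g topology \<Rightarrow> 'g set \<Rightarrow> ('g \<Rightarrow> 'g \<Rightarrow> 'g) \<Rightarrow> ('g \<Rightarrow> 'g) \<Rightarrow> ('g \<Rightarrow> 'g) \<Rightarrow> bool" where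
  "compact_support T G m i f \<longleftrightarrow>
     compactin (subtopology T (units G m i))
       ((subtopology T (units G m i)) closure_of {x \<in> units G m i. f x \<noteq> x})"

definition full_group :: "'g topology \<Rightarrow> 'g set \<Rightarrow> ('g \<Rightarrow> 'g \<Rightarrow> 'g) \<Rightarrow> ('g \<Rightarrow> 'g) \<Rightarrow> ('g \<Rightarrow> 'g) set" where
  "full_group T G m i = {bisect_map G m i U | U. full_bisection T G m i U \<and>
                            compact_support T G m i (bisect_map G m i U)}"

definition full_group_str :: "'g topology \<Rightarrow> 'g set \<Rightarrow> ('g \<Rightarrow> 'g \<Rightarrow> 'g) \<Rightarrow> ('g \<Rightarrow> 'g) \<Rightarrow> ('g \<Rightarrow> 'g) monoid" where
  "full_group_str T G m i = \<lparr>carrier = full_group T G m i, mult = (\<circ>), one = id\<rparr>"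

definition full_group_commutator :: "'g topology \<Rightarrow> 'g set \<Rightarrow> ('g \<Rightarrow> 'g \<Rightarrow> 'g) \<Rightarrow> ('g \<Rightarrow> 'g) \<Rightarrow> ('g \<Rightarrow> 'g) set" where
  "full_group_commutator T G m i =
     derived (full_group_str T G m i) (carrier (full_group_str T G m i))"

definition covers :: "'g topology \<Rightarrow> 'g set \<Rightarrow> ('g \<Rightarrow> 'g \<Rightarrow> 'g) \<Rightarrow> ('g \<Rightarrow> 'g) \<Rightarrow> ('g \<Rightarrow> 'g) set \<Rightarrow> bool" where
  "covers T G m i \<Gamma> \<longleftrightarrow>
     (\<forall>g\<in>G. \<exists>U. full_bisection T G m i U \<and> g \<in> U \<and> bisect_map G m i U \<in> \<Gamma>)"

end

theory Submission
  imports Defs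
begin

locale agpd =
  fixes T :: "'g topology" and G :: "'g set" and m :: "'g \<Rightarrow> 'g \<Rightarrow> 'g" and i :: "'g \<Rightarrow> 'g"
  assumes amp: "ample T G m i"
begin

abbreviation "src \<equiv> gsrc m i"
abbreviation "rng \<equiv> grng m i"
abbreviation "U0 \<equiv> units G m i"

lemma gpd: "groupoid G m i" and topg: "top_groupoid T G m i" and et: "etale T G m i"
  using amp unfolding ample_def etale_def top_groupoid_def by auto

lemma inv_G: "g \<in> G \<Longrightarrow> i g \<in> G" and inv_inv: "g \<in> G \<Longrightarrow> i (i g) = g"
  using gpd unfolding groupoid_def by auto

lemma mult_ax: assumes "g \<in> G" "h \<in> G" "src g = rng h"
  shows "m g h \<in> G" "src (m g h) = src h" "rng (m g h) = rng g"
    "m (i g) (m g h) = h" "m (m g h) (i h) = g"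
  using gpd assms unfolding groupoid_def by auto

lemma assoc: assumes "g \<in> G" "h \<in> G" "k \<in> G" "src g = rng h" "src h = rng k"
  shows "m (m g h) k = m g (m h k)"
  using gpd assms unfolding groupoid_def by blast

lemma rng_inv: "g \<in> G \<Longrightarrow> rng (i g) = src g"
  by (simp add: gsrc_def grng_def inv_inv)
lemma src_inv: "g \<in> G \<Longrightarrow> src (i g) = rng g"
  by (simp add: gsrc_def grng_def inv_inv)

lemma comp_inv: "g \<in> G \<Longrightarrow> src g = rng (i g)"
  by (simp add: rng_inv)
lemma comp_inv2: "g \<in> G \<Longrightarrow> src (i g) = rng g"
  by (simp add: src_inv)
lemma rng_G: "g \<in> G \<Longrightarrow> rng g \<in> G"
  using mult_ax(1)[OF _ inv_G comp_inv, of g] by (simp add: grng_def)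
lemma src_G: "g \<in> G \<Longrightarrow> src g \<in> G"
  using rng_G[of "i g"] by (simp add: inv_G rng_inv)
lemma rng_U0: "g \<in> G \<Longrightarrow> rng g \<in> U0"
  by (simp add: units_def)
lemma src_U0: "g \<in> G \<Longrightarrow> src g \<in> U0"
  using rng_U0[of "i g"] by (simp add: inv_G rng_inv)
lemma U0_G: "U0 \<subseteq> G"
  using rng_G by (auto simp: units_def)

lemma left_unit: "g \<in> G \<Longrightarrow> m (rng g) g = g"
  using mult_ax(5)[OF _ inv_G comp_inv, of g] by (simp add: inv_inv grng_def)
lemma right_unit: "g \<in> G \<Longrightarrow> m g (src g) = g"
  using mult_ax(4)[OF inv_G _ comp_inv2, of g] by (simp add: inv_inv gsrc_def)

lemma unit_props: assumes "x \<in> U0" shows "rng x = x" "src x = x" "i x = x"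
proof -
  obtain a where a: "a \<in> G" "x = rng a" using assms by (auto simp: units_def)
  have c: "src a = rng (i a)" by (simp add: a rng_inv)
  show r: "rng x = x" using mult_ax(3)[OF a(1) inv_G[OF a(1)] c] a by (simp add: grng_def)
  have s: "src x = x" using mult_ax(2)[OF a(1) inv_G[OF a(1)] c] a
    by (simp add: grng_def src_inv)
  show "src x = x" by (rule s)
  have xG: "x \<in> G" using a rng_G by simp
  have "m (i x) (m x (i x)) = i x"
    using mult_ax(4)[OF xG inv_G[OF xG]] by (simp add: rng_inv xG)
  moreover have "m x (i x) = x" using r by (simp add: grng_def)
  ultimately show "i x = x" using s by (simp add: gsrc_def)
qed

lemma topG: "topspace T = G"
  using topg unfolding top_groupoid_def by auto
lemma cont_i: "continuous_map T T i"
  using topg unfolding top_groupoid_def by auto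
lemma cont_m: "continuous_map (subtopology (prod_topology T T) (composable G m i)) T (\<lambda>(g, h). m g h)"
  using topg unfolding top_groupoid_def by auto

lemma cont_rng: "continuous_map T T rng"
proof -
  have c1: "continuous_map T (subtopology (prod_topology T T) (composable G m i)) (\<lambda>g. (g, i g))"
    apply (rule continuous_map_into_subtopology)
    apply (intro continuous_map_pairedI continuous_map_id cont_i)
    using inv_G comp_inv by (auto simp: topG composable_def)
  have "continuous_map T T ((\<lambda>(g, h). m g h) \<circ> (\<lambda>g. (g, i g)))"
    by (rule continuous_map_compose[OF c1 cont_m])
  then show ?thesis by (simp add: o_def grng_def[abs_def])
qed

lemma cont_src: "continuous_map T T src"
proof -
  have "continuous_map T T (rng \<circ> i)" by (rule continuous_map_compose[OF cont_i cont_rng])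
  then show ?thesis
    by (rule continuous_map_eq) (simp add: topG rng_inv)
qed

lemma open_pre: "openin T V \<Longrightarrow> continuous_map T T f \<Longrightarrow> openin T {a \<in> G. f a \<in> V}"
  using openin_continuous_map_preimage[of T T f V] by (simp add: topG)

lemma openin_G: "openin T V \<Longrightarrow> V \<subseteq> G"
  using openin_subset topG by blast

lemma inv_image_eq: "V \<subseteq> G \<Longrightarrow> i ` V = {a \<in> G. i a \<in> V}"
proof
  show "i ` V \<subseteq> {a \<in> G. i a \<in> V}" if "V \<subseteq> G" using that inv_G inv_inv by auto
  show "{a \<in> G. i a \<in> V} \<subseteq> i ` V"
  proof
    fix a assume "a \<in> {a \<in> G. i a \<in> V}"
    then have "a = i (i a)" "i a \<in> V" using inv_inv by auto
    then show "a \<in> i ` V" by blast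
  qed
qed

lemma open_inv: "openin T V \<Longrightarrow> openin T (i ` V)"
  using inv_image_eq[OF openin_G] open_pre[OF _ cont_i] by simp

lemma etale_nbhd: "g \<in> G \<Longrightarrow> \<exists>W. openin T W \<and> g \<in> W \<and>
        openin (subtopology T U0) (rng ` W) \<and>
        homeomorphic_map (subtopology T W) (subtopology T (rng ` W)) rng"
  using et unfolding etale_def by blast

lemma homeo_inj: assumes "openin T W" "homeomorphic_map (subtopology T W) (subtopology T (rng ` W)) rng"
  shows "inj_on rng W"
  using homeomorphic_imp_injective_map[OF assms(2)] openin_G[OF assms(1)] by (simp add: topG Int_absorb1)

lemma homeo_open: assumes "openin T W" "openin (subtopology T U0) (rng ` W)"
  "homeomorphic_map (subtopology T W) (subtopology T (rng ` W)) rng"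
  "openin T W'" "W' \<subseteq> W"
  shows "openin (subtopology T U0) (rng ` W')"
proof -
  have "openin (subtopology T W) W'" using assms(4,5)
    by (simp add: openin_open_subtopology[OF assms(1)])
  then have "openin (subtopology T (rng ` W)) (rng ` W')"
    using homeomorphic_imp_open_map[OF assms(3)] unfolding open_map_def by blast
  moreover have "rng ` W \<subseteq> U0" using rng_U0 openin_G[OF assms(1)] by auto
  ultimately have "openin (subtopology (subtopology T U0) (rng ` W)) (rng ` W')"
    by (simp add: subtopology_subtopology Int_absorb1)
  then show ?thesis using openin_trans_full assms(2) by blast
qed

lemma rng_open_map: assumes "openin T V" shows "openin (subtopology T U0) (rng ` V)"
proof (subst openin_subopen, intro ballI)
  fix y assume "y \<in> rng ` V"
  then obtain g where g: "g \<in> V" "y = rng g" by auto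
  then have gG: "g \<in> G" using openin_G[OF assms] by auto
  obtain W where W: "openin T W" "g \<in> W" "openin (subtopology T U0) (rng ` W)"
     "homeomorphic_map (subtopology T W) (subtopology T (rng ` W)) rng"
    using etale_nbhd[OF gG] by blast
  have "openin (subtopology T U0) (rng ` (W \<inter> V))"
    using homeo_open[OF W(1,3,4), of "W \<inter> V"] W(1) assms by auto
  then show "\<exists>T'. openin (subtopology T U0) T' \<and> y \<in> T' \<and> T' \<subseteq> rng ` V"
    using g W by blast
qed

lemma U0_open: "openin T U0"
proof (subst openin_subopen, intro ballI)
  fix x assume x: "x \<in> U0"
  then have xG: "x \<in> G" using U0_G by auto
  obtain W where W: "openin T W" "x \<in> W" "openin (subtopology T U0) (rng ` W)"
     "homeomorphic_map (subtopology T W) (subtopology T (rng ` W)) rng"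
    using etale_nbhd[OF xG] by blast
  have inj: "inj_on rng W" using homeo_inj W by blast
  define N where "N = W \<inter> {a \<in> G. rng a \<in> W}"
  have "openin T N" unfolding N_def using open_pre[OF W(1) cont_rng] W(1) by auto
  moreover have "x \<in> N" using x W unit_props[OF x] xG by (auto simp: N_def)
  moreover have "N \<subseteq> U0"
  proof
    fix a assume a: "a \<in> N"
    then have "a \<in> G" "a \<in> W" "rng a \<in> W" by (auto simp: N_def)
    moreover have "rng (rng a) = rng a" using unit_props(1)[OF rng_U0] \<open>a \<in> G\<close> by blast
    ultimately have "a = rng a" using inj by (metis inj_onD)
    then show "a \<in> U0" using rng_U0 \<open>a \<in> G\<close> by metis
  qed
  ultimately show "\<exists>T'. openin T T' \<and> x \<in> T' \<and> T' \<subseteq> U0" by blast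
qed

lemma open_U0_open: "openin (subtopology T U0) V \<Longrightarrow> openin T V"
  using openin_trans_full U0_open by blast

lemma haus: "Hausdorff_space (subtopology T U0)"
  using amp unfolding ample_def by auto
lemma ample_basis: "openin (subtopology T U0) W \<Longrightarrow> x \<in> W \<Longrightarrow>
   \<exists>K. openin (subtopology T U0) K \<and> compactin T K \<and> x \<in> K \<and> K \<subseteq> W"
  using amp unfolding ample_def by auto
lemma top_U0: "topspace (subtopology T U0) = U0"
  using U0_G topG by auto

lemma cs_intro: assumes "{x \<in> U0. f x \<noteq> x} \<subseteq> K" "compactin (subtopology T U0) K"
  shows "compact_support T G m i f"
proof -
  have "closedin (subtopology T U0) K" using compactin_imp_closedin[OF haus assms(2)] .
  then have "(subtopology T U0) closure_of {x \<in> U0. f x \<noteq> x} \<subseteq> K"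
    using closure_of_minimal assms(1) by blast
  then show ?thesis unfolding compact_support_def
    using closed_compactin[OF assms(2)] closedin_closure_of by blast
qed

lemma bm_eq: assumes "full_bisection T G m i U" "a \<in> U"
  shows "bisect_map G m i U (src a) = rng a"
proof -
  have aG: "a \<in> G" using assms unfolding full_bisection_def by auto
  have inj: "inj_on src U" using assms(1) unfolding full_bisection_def by auto
  have "(THE b. b \<in> U \<and> src b = src a) = a"
    using assms(2) inj by (auto intro!: the_equality dest: inj_onD)
  then show ?thesis using src_U0[OF aG] by (simp add: bisect_map_def)
qed

lemma bm_out: "x \<notin> U0 \<Longrightarrow> bisect_map G m i U x = x"
  by (simp add: bisect_map_def)

lemma bm_ex: "full_bisection T G m i U \<Longrightarrow> x \<in> U0 \<Longrightarrow> \<exists>a\<in>U. src a = x"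
  unfolding full_bisection_def by (metis imageE)

lemma bm_invol: assumes "full_bisection T G m i U" "\<forall>a\<in>U. i a \<in> U"
  shows "bisect_map G m i U \<circ> bisect_map G m i U = id"
proof
  fix x show "(bisect_map G m i U \<circ> bisect_map G m i U) x = id x"
  proof (cases "x \<in> U0")
    case True
    then obtain a where a: "a \<in> U" "src a = x" using bm_ex assms(1) by blast
    have aG: "a \<in> G" using a assms(1) unfolding full_bisection_def by auto
    have "bisect_map G m i U x = rng a" using bm_eq[OF assms(1) a(1)] a by simp
    moreover have "bisect_map G m i U (rng a) = x"
      using bm_eq[OF assms(1), of "i a"] assms(2) a aG by (simp add: src_inv rng_inv)
    ultimately show ?thesis by simp
  next
    case False then show ?thesis by (simp add: bm_out)
  qed
qed

lemma imgE2: "y \<in> f ` A \<Longrightarrow> (\<And>x. x \<in> A \<Longrightarrow> f x = y \<Longrightarrow> P) \<Longrightarrow> P"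
  by blast

lemma inj3: "inj_on f A \<Longrightarrow> inj_on f B \<Longrightarrow> inj_on f C \<Longrightarrow> f`A \<inter> f`B = {} \<Longrightarrow>
   f`A \<inter> f`C = {} \<Longrightarrow> f`B \<inter> f`C = {} \<Longrightarrow> inj_on f (A \<union> B \<union> C)"
  by (auto simp: inj_on_Un)

lemma transposition:
  assumes gG: "g \<in> G" and ne: "src g \<noteq> rng g" and Ob: "openin (subtopology T U0) Ob"
    and xO: "src g \<in> Ob" and yO: "rng g \<in> Ob"
  shows "\<exists>U. full_bisection T G m i U \<and> g \<in> U \<and> (\<forall>a\<in>U. i a \<in> U) \<and>
     compact_support T G m i (bisect_map G m i U) \<and> U0 - Ob \<subseteq> U"
proof -
  define x where "x = src g"
  define y where "y = rng g"
  have xU: "x \<in> U0" "y \<in> U0" using src_U0 rng_U0 gG by (auto simp: x_def y_def)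
  obtain O1 O2 where O12: "openin (subtopology T U0) O1" "openin (subtopology T U0) O2"
    "x \<in> O1" "y \<in> O2" "disjnt O1 O2"
    using haus xU ne unfolding Hausdorff_space_def top_U0 x_def y_def by blast
  define O1' where "O1' = O1 \<inter> Ob"
  define O2' where "O2' = O2 \<inter> Ob"
  have O12': "openin T O1'" "openin T O2'"
    using O12 Ob open_U0_open openin_Int unfolding O1'_def O2'_def by blast+
  have dj: "O1' \<inter> O2' = {}" using O12(5) by (auto simp: O1'_def O2'_def disjnt_def)
  obtain W1 where W1: "openin T W1" "g \<in> W1" "openin (subtopology T U0) (rng ` W1)"
        "homeomorphic_map (subtopology T W1) (subtopology T (rng ` W1)) rng"
    using etale_nbhd[OF gG] by blast
  obtain W2 where W2: "openin T W2" "i g \<in> W2" "openin (subtopology T U0) (rng ` W2)"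
        "homeomorphic_map (subtopology T W2) (subtopology T (rng ` W2)) rng"
    using etale_nbhd[OF inv_G[OF gG]] by blast
  have inj1: "inj_on rng W1" using homeo_inj W1 by blast
  have inj2: "inj_on rng W2" using homeo_inj W2 by blast
  define W where "W = W1 \<inter> {a \<in> G. i a \<in> W2} \<inter> {a \<in> G. src a \<in> O1'} \<inter> {a \<in> G. rng a \<in> O2'}"
  have Wo: "openin T W" unfolding W_def
    by (intro openin_Int W1(1) open_pre cont_i cont_src cont_rng W2(1) O12')
  have gW: "g \<in> W" using W1 W2 O12 xO yO gG by (auto simp: W_def O1'_def O2'_def x_def y_def)
  have WG: "W \<subseteq> G" using openin_G[OF Wo] .
  have injr: "inj_on rng W" using inj1 by (rule inj_on_subset) (auto simp: W_def)
  have injs: "inj_on src W"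
  proof (rule inj_onI)
    fix a b assume ab: "a \<in> W" "b \<in> W" "src a = src b"
    have "a \<in> G" "b \<in> G" using ab WG by auto
    then have "rng (i a) = rng (i b)" using ab(3) by (simp add: rng_inv)
    then have "i a = i b" using inj2 ab by (auto simp: W_def dest: inj_onD)
    then show "a = b" using inv_inv ab WG by (metis subsetD)
  qed
  have rWo: "openin (subtopology T U0) (rng ` W)"
    using homeo_open[OF W1(1,3,4) Wo] by (auto simp: W_def)
  obtain K where K: "openin (subtopology T U0) K" "compactin T K" "y \<in> K" "K \<subseteq> rng ` W"
    using ample_basis[OF rWo] gW unfolding y_def by blast
  define B where "B = {a \<in> W. rng a \<in> K}"
  have Bo: "openin T B" unfolding B_def
  proof -
    have "{a \<in> W. rng a \<in> K} = W \<inter> {a \<in> G. rng a \<in> K}" using WG by auto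
    then show "openin T {a \<in> W. rng a \<in> K}"
      using openin_Int[OF Wo open_pre[OF open_U0_open[OF K(1)] cont_rng]] by simp
  qed
  have gB: "g \<in> B" using gW K(3) by (simp add: B_def y_def)
  have BG: "B \<subseteq> G" using WG by (auto simp: B_def)
  obtain \<psi> where psi: "homeomorphic_maps (subtopology T W1) (subtopology T (rng ` W1)) rng \<psi>"
    using W1(4) homeomorphic_map_maps by blast
  have W1G: "W1 \<subseteq> G" using openin_G[OF W1(1)] .
  have psi_c: "continuous_map (subtopology T (rng ` W1)) (subtopology T W1) \<psi>"
    using psi unfolding homeomorphic_maps_def by auto
  have psi_inv: "\<And>a. a \<in> W1 \<Longrightarrow> \<psi> (rng a) = a"
    using psi W1G unfolding homeomorphic_maps_def by (auto simp: topG)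
  have "compactin (subtopology T (rng ` W1)) K"
    using K(2,4) by (auto simp: compactin_subtopology W_def)
  then have "compactin (subtopology T W1) (\<psi> ` K)" using image_compactin psi_c by blast
  then have c1: "compactin T (\<psi> ` K)" by (simp add: compactin_subtopology)
  have "\<psi> ` K = B"
  proof
    show "\<psi> ` K \<subseteq> B"
    proof
      fix b assume "b \<in> \<psi> ` K"
      then obtain k where k: "k \<in> K" "b = \<psi> k" by auto
      then obtain a where a: "a \<in> W" "k = rng a" using K(4) by auto
      then have "\<psi> k = a" using psi_inv by (auto simp: W_def)
      then show "b \<in> B" using a k by (auto simp: B_def)
    qed
    show "B \<subseteq> \<psi> ` K"
    proof
      fix a assume "a \<in> B"
      then have "a = \<psi> (rng a)" "rng a \<in> K" using psi_inv by (auto simp: B_def W_def)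
      then show "a \<in> \<psi> ` K" by blast
    qed
  qed
  then have Bc: "compactin T B" using c1 by simp
  define sB where "sB = src ` B"
  define rB where "rB = rng ` B"
  have sBc: "compactin (subtopology T U0) sB"
    unfolding sB_def compactin_subtopology
    using image_compactin[OF Bc cont_src] src_U0 BG by auto
  have rBc: "compactin (subtopology T U0) rB"
    unfolding rB_def compactin_subtopology
    using image_compactin[OF Bc cont_rng] rng_U0 BG by auto
  have sBcl: "closedin (subtopology T U0) (sB \<union> rB)"
    using compactin_imp_closedin[OF haus] sBc rBc closedin_Un by blast
  have sBO: "sB \<subseteq> O1'" "rB \<subseteq> O2'" by (auto simp: sB_def rB_def B_def W_def)
  define P where "P = U0 - (sB \<union> rB)"
  have Po: "openin T P"
    using sBcl unfolding closedin_def top_U0 P_def using open_U0_open by blast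
  define U where "U = B \<union> i ` B \<union> P"
  have Uo: "openin T U" unfolding U_def using Bo open_inv[OF Bo] Po by blast
  have PG: "P \<subseteq> G" using U0_G by (auto simp: P_def)
  have UG: "U \<subseteq> G" unfolding U_def using BG PG inv_G by auto
  have Pu: "\<And>z. z \<in> P \<Longrightarrow> src z = z \<and> rng z = z \<and> i z = z" using unit_props by (auto simp: P_def)
  have srcP: "src ` P = P" using Pu by force
  have rngP: "rng ` P = P" using Pu by force
  have srciB: "src ` (i ` B) = rB" unfolding rB_def image_image using BG src_inv
    by (intro image_cong) auto
  have rngiB: "rng ` (i ` B) = sB" unfolding sB_def image_image using BG rng_inv
    by (intro image_cong) auto
  have injsB: "inj_on src B" using injs by (rule inj_on_subset) (auto simp: B_def)
  have injrB: "inj_on rng B" using injr by (rule inj_on_subset) (auto simp: B_def)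
  have injiB: "inj_on i B" using BG inv_inv by (metis inj_onI subsetD)
  have injsiB: "inj_on src (i ` B)"
  proof (rule inj_onI)
    fix a b assume ab: "a \<in> i ` B" "b \<in> i ` B" "src a = src b"
    then obtain a' b' where ab': "a' \<in> B" "b' \<in> B" "a = i a'" "b = i b'" by blast
    then have "a' \<in> G" "b' \<in> G" using BG by auto
    then have "rng a' = rng b'" using ab(3) ab' by (simp add: src_inv)
    note ab' this
    then show "a = b" using injrB by (auto dest: inj_onD)
  qed
  have injriB: "inj_on rng (i ` B)"
  proof (rule inj_onI)
    fix a b assume ab: "a \<in> i ` B" "b \<in> i ` B" "rng a = rng b"
    then obtain a' b' where ab': "a' \<in> B" "b' \<in> B" "a = i a'" "b = i b'" by blast
    then have "a' \<in> G" "b' \<in> G" using BG by auto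
    then have "src a' = src b'" using ab(3) ab' by (simp add: rng_inv)
    note ab' this
    then show "a = b" using injsB by (auto dest: inj_onD)
  qed
  have injP: "inj_on src P" "inj_on rng P" using Pu by (auto intro: inj_onI)
  have djsr: "sB \<inter> rB = {}" using sBO dj by auto
  have inju: "inj_on src U" unfolding U_def
    apply (rule inj3[OF injsB injsiB injP(1)])
    apply (unfold srciB srcP sB_def[symmetric])
    using djsr by (auto simp: P_def)
  have injur: "inj_on rng U" unfolding U_def
    apply (rule inj3[OF injrB injriB injP(2)])
    apply (unfold rngiB rngP rB_def[symmetric])
    using djsr by (auto simp: P_def)
  have sBU: "sB \<subseteq> U0" "rB \<subseteq> U0" using BG src_U0 rng_U0 by (auto simp: sB_def rB_def)
  have sU: "src ` U = U0" unfolding U_def image_Un srciB srcP sB_def[symmetric]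
    using sBU by (auto simp: P_def)
  have rU: "rng ` U = U0" unfolding U_def image_Un rngiB rngP rB_def[symmetric]
    using sBU by (auto simp: P_def)
  have fb: "full_bisection T G m i U"
    unfolding full_bisection_def using Uo UG inju injur sU rU by auto
  have gU: "g \<in> U" using gB by (simp add: U_def)
  have icl: "\<forall>a\<in>U. i a \<in> U" unfolding U_def using Pu BG inv_inv by auto
  have OU: "U0 - Ob \<subseteq> U" using sBO by (auto simp: U_def P_def O1'_def O2'_def)
  have "{z \<in> U0. bisect_map G m i U z \<noteq> z} \<subseteq> sB \<union> rB"
  proof
    fix z assume z: "z \<in> {z \<in> U0. bisect_map G m i U z \<noteq> z}"
    show "z \<in> sB \<union> rB"
    proof (rule ccontr)
      assume "z \<notin> sB \<union> rB"
      then have "z \<in> P" using z by (simp add: P_def)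
      then have "bisect_map G m i U z = z" using bm_eq[OF fb, of z] Pu by (simp add: U_def)
      then show False using z by simp
    qed
  qed
  then have "compact_support T G m i (bisect_map G m i U)"
    using cs_intro compactin_Un[OF sBc rBc] by blast
  then show ?thesis using fb gU icl OU by blast
qed

definition bprod :: "'g set \<Rightarrow> 'g set \<Rightarrow> 'g set" where
  "bprod U V = {m u v | u v. u \<in> U \<and> v \<in> V \<and> src u = rng v}"

lemma bprod_mem: "u \<in> U \<Longrightarrow> v \<in> V \<Longrightarrow> src u = rng v \<Longrightarrow> m u v \<in> bprod U V"
  unfolding bprod_def by auto

lemma bprod_open: assumes Uo: "openin T U" and Vo: "openin T V"
  shows "openin T (bprod U V)"
proof (subst openin_subopen, intro ballI)
  fix w assume "w \<in> bprod U V"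
  then obtain u v where uv: "u \<in> U" "v \<in> V" "src u = rng v" "w = m u v"
    unfolding bprod_def by blast
  have uG: "u \<in> G" and vG: "v \<in> G" using uv openin_G Uo Vo by auto
  obtain W where W: "openin T W" "u \<in> W" "openin (subtopology T U0) (rng ` W)"
        "homeomorphic_map (subtopology T W) (subtopology T (rng ` W)) rng"
    using etale_nbhd[OF uG] by blast
  have WG: "W \<subseteq> G" using openin_G[OF W(1)] .
  define W' where "W' = W \<inter> U"
  have W'o: "openin T W'" using W(1) Uo by (simp add: W'_def openin_Int)
  have rW'o: "openin T (rng ` W')"
    using homeo_open[OF W(1,3,4) W'o] open_U0_open by (auto simp: W'_def)
  obtain \<psi> where psi: "homeomorphic_maps (subtopology T W) (subtopology T (rng ` W)) rng \<psi>"
    using W(4) homeomorphic_map_maps by blast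
  have psi_c: "continuous_map (subtopology T (rng ` W)) (subtopology T W) \<psi>"
    using psi unfolding homeomorphic_maps_def by auto
  have psi_inv: "\<And>a. a \<in> W \<Longrightarrow> \<psi> (rng a) = a"
    using psi WG unfolding homeomorphic_maps_def by (auto simp: topG)
  define D where "D = {g \<in> G. rng g \<in> rng ` W'}"
  have Do: "openin T D" unfolding D_def by (rule open_pre[OF rW'o cont_rng])
  have DG: "D \<subseteq> G" by (auto simp: D_def)
  have psiD: "\<And>g. g \<in> D \<Longrightarrow> \<psi> (rng g) \<in> W' \<and> rng (\<psi> (rng g)) = rng g"
  proof -
    fix g assume "g \<in> D"
    then obtain a where a: "a \<in> W'" "rng g = rng a" by (auto simp: D_def)
    then show "\<psi> (rng g) \<in> W' \<and> rng (\<psi> (rng g)) = rng g" using psi_inv by (auto simp: W'_def)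
  qed
  define X where "X = subtopology T D"
  have tX: "topspace X = D" using DG by (auto simp: X_def topG)
  have c1: "continuous_map X (subtopology T (rng ` W)) rng"
    unfolding X_def
    apply (rule continuous_map_into_subtopology[OF continuous_map_from_subtopology[OF cont_rng]])
    using DG by (auto simp: topG D_def W'_def)
  have c2: "continuous_map X T (\<lambda>g. i (\<psi> (rng g)))"
  proof -
    have "continuous_map X (subtopology T W) (\<psi> \<circ> rng)" by (rule continuous_map_compose[OF c1 psi_c])
    then have "continuous_map X T (\<psi> \<circ> rng)" by (rule continuous_map_into_fulltopology)
    then have "continuous_map X T (i \<circ> (\<psi> \<circ> rng))" by (rule continuous_map_compose[OF _ cont_i])
    then show ?thesis by (simp add: o_def)
  qed
  have c3: "continuous_map X (subtopology (prod_topology T T) (composable G m i)) (\<lambda>g. (i (\<psi> (rng g)), g))"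
    apply (rule continuous_map_into_subtopology)
     apply (intro continuous_map_pairedI c2)
    unfolding X_def apply (rule continuous_map_from_subtopology[OF continuous_map_id[unfolded id_def]])
    unfolding tX[unfolded X_def]
  proof
    fix g assume g: "g \<in> D"
    then have "\<psi> (rng g) \<in> G" using psiD WG by (auto simp: W'_def)
    then show "(i (\<psi> (rng g)), g) \<in> composable G m i"
      using g DG psiD[OF g] inv_G src_inv by (auto simp: composable_def)
  qed
  define F where "F = (\<lambda>g. m (i (\<psi> (rng g))) g)"
  have cF: "continuous_map X T F"
    using continuous_map_compose[OF c3 cont_m] unfolding F_def by (simp add: o_def)
  define N where "N = {g \<in> topspace X. F g \<in> V}"
  have "openin X N" unfolding N_def by (rule openin_continuous_map_preimage[OF cF Vo])
  then have No: "openin T N" using Do openin_trans_full unfolding X_def by blast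
  have wD: "w \<in> D" using uv uG vG mult_ax(3)[OF uG vG uv(3)] mult_ax(1)[OF uG vG uv(3)] W(2)
    by (auto simp: D_def W'_def)
  have "F w = v" unfolding F_def
    using psi_inv[OF W(2)] mult_ax(3,4)[OF uG vG uv(3)] uv(4) by simp
  then have wN: "w \<in> N" using wD uv(2) by (simp add: N_def tX)
  have "N \<subseteq> bprod U V"
  proof
    fix g assume g: "g \<in> N"
    then have gD: "g \<in> D" and FV: "F g \<in> V" by (auto simp: N_def tX)
    define a where "a = \<psi> (rng g)"
    have aW: "a \<in> W'" "rng a = rng g" using psiD[OF gD] by (auto simp: a_def)
    have aG: "a \<in> G" using aW WG by (auto simp: W'_def)
    have gG: "g \<in> G" using gD DG by auto
    have c: "src (i a) = rng g" using aW aG src_inv by simp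
    have "m (i (i a)) (m (i a) g) = g" by (rule mult_ax(4)[OF inv_G[OF aG] gG c])
    then have e: "m a (F g) = g" by (simp add: F_def a_def[symmetric] inv_inv[OF aG])
    have "rng (F g) = src a" unfolding F_def a_def[symmetric]
      using mult_ax(3)[OF inv_G[OF aG] gG c] rng_inv[OF aG] by simp
    moreover have "a \<in> U" using aW by (simp add: W'_def)
    ultimately show "g \<in> bprod U V" unfolding bprod_def using e FV by force
  qed
  then show "\<exists>T'. openin T T' \<and> w \<in> T' \<and> T' \<subseteq> bprod U V" using No wN by blast
qed

lemma bprod_fb: assumes U: "full_bisection T G m i U" and V: "full_bisection T G m i V"
  shows "full_bisection T G m i (bprod U V)"
    and "bisect_map G m i (bprod U V) = bisect_map G m i U \<circ> bisect_map G m i V"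
proof -
  have UG: "U \<subseteq> G" and VG: "V \<subseteq> G" using U V unfolding full_bisection_def by auto
  have iU: "inj_on src U" "inj_on rng U" "src ` U = U0" "rng ` U = U0" "openin T U"
    using U unfolding full_bisection_def by auto
  have iV: "inj_on src V" "inj_on rng V" "src ` V = U0" "rng ` V = U0" "openin T V"
    using V unfolding full_bisection_def by auto
  have el: "\<And>w. w \<in> bprod U V \<Longrightarrow> \<exists>u v. u \<in> U \<and> v \<in> V \<and> src u = rng v \<and> w = m u v
       \<and> w \<in> G \<and> src w = src v \<and> rng w = rng u"
  proof -
    fix w assume "w \<in> bprod U V"
    then obtain u v where uv: "u \<in> U" "v \<in> V" "src u = rng v" "w = m u v"
      unfolding bprod_def by blast
    then have "u \<in> G" "v \<in> G" using UG VG by auto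
    then have "m u v \<in> G" "src (m u v) = src v" "rng (m u v) = rng u" using mult_ax(1-3) uv(3) by auto
    then show "\<exists>u v. u \<in> U \<and> v \<in> V \<and> src u = rng v \<and> w = m u v
       \<and> w \<in> G \<and> src w = src v \<and> rng w = rng u"
      by (intro exI[of _ u] exI[of _ v]) (simp add: uv)
  qed
  have inS: "\<And>u v. u \<in> U \<Longrightarrow> v \<in> V \<Longrightarrow> src u = rng v \<Longrightarrow> m u v \<in> bprod U V"
    unfolding bprod_def by auto
  have sub: "bprod U V \<subseteq> G" using el by blast
  have injs: "inj_on src (bprod U V)"
  proof (rule inj_onI)
    fix w w' assume ww: "w \<in> bprod U V" "w' \<in> bprod U V" "src w = src w'"
    obtain u v where a1: "u \<in> U" "v \<in> V" "src u = rng v" "w = m u v" "src w = src v" "rng w = rng u"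
      using el[OF ww(1)] by blast
    obtain u' v' where a2: "u' \<in> U" "v' \<in> V" "src u' = rng v'" "w' = m u' v'" "src w' = src v'" "rng w' = rng u'"
      using el[OF ww(2)] by blast
    note a = a1 a2 ww(3)
    then have "v = v'" using iV(1) inj_onD[of src V v v'] by simp
    then have "u = u'" using a iU(1) inj_onD[of src U u u'] by simp
    then show "w = w'" using a \<open>v = v'\<close> by simp
  qed
  have injr: "inj_on rng (bprod U V)"
  proof (rule inj_onI)
    fix w w' assume ww: "w \<in> bprod U V" "w' \<in> bprod U V" "rng w = rng w'"
    obtain u v where a1: "u \<in> U" "v \<in> V" "src u = rng v" "w = m u v" "src w = src v" "rng w = rng u"
      using el[OF ww(1)] by blast
    obtain u' v' where a2: "u' \<in> U" "v' \<in> V" "src u' = rng v'" "w' = m u' v'" "src w' = src v'" "rng w' = rng u'"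
      using el[OF ww(2)] by blast
    note a = a1 a2 ww(3)
    then have "u = u'" using iU(2) inj_onD[of rng U u u'] by simp
    then have "v = v'" using a iV(2) inj_onD[of rng V v v'] by simp
    then show "w = w'" using a \<open>u = u'\<close> by simp
  qed
  have sP: "src ` bprod U V = U0"
  proof
    show "src ` bprod U V \<subseteq> U0" using sub src_U0 by auto
    show "U0 \<subseteq> src ` bprod U V"
    proof
      fix x assume x: "x \<in> U0"
      have "x \<in> src ` V" using iV(3) x by (rule ssubst)
      then obtain v where v: "v \<in> V" "src v = x" by (rule imgE2)
      have vG: "v \<in> G" using v(1) VG by (rule rev_subsetD)
      have "rng v \<in> src ` U" using iU(3) rng_U0[OF vG] by (rule ssubst)
      then obtain u where u: "u \<in> U" "src u = rng v" by (rule imgE2)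
      have uG: "u \<in> G" using u(1) UG by (rule rev_subsetD)
      have "src (m u v) = src v" by (rule mult_ax(2)[OF uG vG u(2)])
      then have e: "x = src (m u v)" using v(2) by simp
      show "x \<in> src ` bprod U V" by (rule image_eqI[where f=src, OF e inS[OF u(1) v(1) u(2)]])
    qed
  qed
  have rP: "rng ` bprod U V = U0"
  proof
    show "rng ` bprod U V \<subseteq> U0" using sub rng_U0 by auto
    show "U0 \<subseteq> rng ` bprod U V"
    proof
      fix x assume x: "x \<in> U0"
      then have "x \<in> rng ` U" using iU(4) by simp
      then obtain u where u: "u \<in> U" "rng u = x" by (rule imgE2)
      then have "src u \<in> U0" using UG src_U0 by auto
      then have "src u \<in> rng ` V" using iV(4) by simp
      then obtain v where v: "v \<in> V" "rng v = src u" by (rule imgE2)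
      have "rng (m u v) = x" using mult_ax(3)[OF _ _ v(2)[symmetric]] u v UG VG by auto
      then have e: "x = rng (m u v)" by simp
      show "x \<in> rng ` bprod U V" by (rule image_eqI[where f=rng, OF e inS[OF u(1) v(1) v(2)[symmetric]]])
    qed
  qed
  show fb: "full_bisection T G m i (bprod U V)"
    unfolding full_bisection_def by (intro conjI bprod_open[OF iU(5) iV(5)] sub injs injr sP rP)
  show "bisect_map G m i (bprod U V) = bisect_map G m i U \<circ> bisect_map G m i V"
  proof
    fix x show "bisect_map G m i (bprod U V) x = (bisect_map G m i U \<circ> bisect_map G m i V) x"
    proof (cases "x \<in> U0")
      case True
      then have "x \<in> src ` V" using iV(3) by simp
      then obtain v where v: "v \<in> V" "src v = x" by (rule imgE2)
      then have "rng v \<in> U0" using VG rng_U0 by auto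
      then have "rng v \<in> src ` U" using iU(3) by simp
      then obtain u where u: "u \<in> U" "src u = rng v" by (rule imgE2)
      have uG: "u \<in> G" "v \<in> G" using u v UG VG by auto
      have "bisect_map G m i (bprod U V) x = rng (m u v)"
        using bm_eq[OF fb inS[OF u(1) v(1) u(2)]] mult_ax(2)[OF uG u(2)] v by simp
      also have "\<dots> = rng u" using mult_ax(3)[OF uG u(2)] .
      also have "\<dots> = bisect_map G m i U (bisect_map G m i V x)"
        using bm_eq[OF U u(1)] bm_eq[OF V v(1)] u v by simp
      finally show ?thesis by simp
    next
      case False then show ?thesis by (simp add: bm_out)
    qed
  qed
qed

lemma cs_comp: assumes "compact_support T G m i f" "compact_support T G m i h"
  shows "compact_support T G m i (f \<circ> h)"
proof -
  let ?X = "subtopology T U0"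
  let ?Sf = "{x \<in> U0. f x \<noteq> x}" and ?Sh = "{x \<in> U0. h x \<noteq> x}"
  have "?Sf \<subseteq> ?X closure_of ?Sf" "?Sh \<subseteq> ?X closure_of ?Sh"
    by (intro closure_of_subset, unfold top_U0, blast)+
  then have "{x \<in> U0. (f \<circ> h) x \<noteq> x} \<subseteq> ?X closure_of ?Sf \<union> ?X closure_of ?Sh"
  proof (intro subsetI)
    fix x assume a: "?Sf \<subseteq> ?X closure_of ?Sf" "?Sh \<subseteq> ?X closure_of ?Sh" and x: "x \<in> {x \<in> U0. (f \<circ> h) x \<noteq> x}"
    show "x \<in> ?X closure_of ?Sf \<union> ?X closure_of ?Sh"
    proof (cases "h x = x")
      case True then have "x \<in> ?Sf" using x by simp
      then show ?thesis using a(1) by blast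
    next
      case False then have "x \<in> ?Sh" using x by simp
      then show ?thesis using a(2) by blast
    qed
  qed
  moreover have "compactin ?X (?X closure_of ?Sf \<union> ?X closure_of ?Sh)"
    using assms unfolding compact_support_def by (intro compactin_Un)
  ultimately show ?thesis by (rule cs_intro)
qed

lemma fg_mem: "f \<in> full_group T G m i \<Longrightarrow> \<exists>U. full_bisection T G m i U \<and> f = bisect_map G m i U \<and> compact_support T G m i f"
  unfolding full_group_def by auto

lemma fg_intro: "full_bisection T G m i U \<Longrightarrow> compact_support T G m i (bisect_map G m i U) \<Longrightarrow>
   bisect_map G m i U \<in> full_group T G m i"
  unfolding full_group_def by auto

lemma fg_comp: assumes "f \<in> full_group T G m i" "h \<in> full_group T G m i"
  shows "f \<circ> h \<in> full_group T G m i"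
proof -
  obtain U where U: "full_bisection T G m i U" "f = bisect_map G m i U" "compact_support T G m i f"
    using fg_mem[OF assms(1)] by blast
  obtain V where V: "full_bisection T G m i V" "h = bisect_map G m i V" "compact_support T G m i h"
    using fg_mem[OF assms(2)] by blast
  have "bisect_map G m i (bprod U V) = f \<circ> h" using bprod_fb(2)[OF U(1) V(1)] U V by simp
  then show ?thesis using fg_intro[OF bprod_fb(1)[OF U(1) V(1)]] cs_comp[OF U(3) V(3)] by simp
qed

lemma cover_gen:
  assumes cl: "\<And>f h. f \<in> \<Gamma> \<Longrightarrow> h \<in> \<Gamma> \<Longrightarrow> f \<circ> h \<in> \<Gamma>"
    and noniso: "\<And>g. g \<in> G \<Longrightarrow> src g \<noteq> rng g \<Longrightarrow>
        \<exists>U. full_bisection T G m i U \<and> g \<in> U \<and> bisect_map G m i U \<in> \<Gamma>"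
    and orb: "\<And>x. x \<in> U0 \<Longrightarrow> \<exists>z\<in>orbit G m i x. z \<noteq> x"
  shows "covers T G m i \<Gamma>"
  unfolding covers_def
proof
  fix g assume gG: "g \<in> G"
  show "\<exists>U. full_bisection T G m i U \<and> g \<in> U \<and> bisect_map G m i U \<in> \<Gamma>"
  proof (cases "src g = rng g")
    case False then show ?thesis using noniso gG by blast
  next
    case True
    obtain z where z: "z \<in> orbit G m i (src g)" "z \<noteq> src g" using orb src_U0[OF gG] by blast
    then obtain k where k: "k \<in> G" "src k = src g" "z = rng k" unfolding orbit_def by blast
    have c1: "src k = rng g" using k True by simp
    have kg: "m k g \<in> G" "src (m k g) = src g" "rng (m k g) = rng k" using mult_ax[OF k(1) gG c1] by auto
    obtain V1 where V1: "full_bisection T G m i V1" "m k g \<in> V1" "bisect_map G m i V1 \<in> \<Gamma>"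
      using noniso[OF kg(1)] kg z k by auto
    have ik: "i k \<in> G" "src (i k) = rng k" "rng (i k) = src k" using k inv_G src_inv rng_inv by auto
    obtain V2 where V2: "full_bisection T G m i V2" "i k \<in> V2" "bisect_map G m i V2 \<in> \<Gamma>"
      using noniso[OF ik(1)] ik z k by auto
    have c2: "src (i k) = rng (m k g)" using ik kg by simp
    have "m (i k) (m k g) \<in> bprod V2 V1" by (rule bprod_mem[OF V2(2) V1(2) c2])
    moreover have "m (i k) (m k g) = g" using mult_ax(4)[OF k(1) gG c1] .
    ultimately have "g \<in> bprod V2 V1" by simp
    moreover have "full_bisection T G m i (bprod V2 V1)" by (rule bprod_fb(1)[OF V2(1) V1(1)])
    moreover have "bisect_map G m i (bprod V2 V1) \<in> \<Gamma>"
      unfolding bprod_fb(2)[OF V2(1) V1(1)] by (rule cl[OF V2(3) V1(3)])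
    ultimately show ?thesis by blast
  qed
qed

lemma card_ge2: "card_ge A 2 \<Longrightarrow> \<exists>z\<in>A. z \<noteq> x"
proof -
  assume a: "card_ge A 2"
  show ?thesis
  proof (rule ccontr)
    assume "\<not> ?thesis"
    then have "A \<subseteq> {x}" by blast
    then have "finite A" "card A \<le> 1" using finite_subset card_mono[of "{x}" A] by auto
    then show False using a unfolding card_ge_def by auto
  qed
qed

lemma card_ge3: "card_ge A 3 \<Longrightarrow> \<exists>z\<in>A. z \<noteq> x \<and> z \<noteq> y"
proof -
  assume a: "card_ge A 3"
  show ?thesis
  proof (rule ccontr)
    assume "\<not> ?thesis"
    then have "A \<subseteq> {x, y}" by blast
    moreover have "card {x, y} \<le> 2" by (simp add: card_insert_le_m1)
    ultimately have "finite A" "card A \<le> 2" using finite_subset card_mono[of "{x, y}" A] by auto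
    then show False using a unfolding card_ge_def by auto
  qed
qed

lemma part1: assumes "\<forall>x\<in>U0. card_ge (orbit G m i x) 2"
  shows "covers T G m i (full_group T G m i)"
proof (rule cover_gen)
  show "\<And>f h. f \<in> full_group T G m i \<Longrightarrow> h \<in> full_group T G m i \<Longrightarrow> f \<circ> h \<in> full_group T G m i"
    by (rule fg_comp)
  show "\<And>x. x \<in> U0 \<Longrightarrow> \<exists>z\<in>orbit G m i x. z \<noteq> x"
  proof -
    fix x assume "x \<in> U0"
    then have "card_ge (orbit G m i x) 2" using assms by simp
    then show "\<exists>z\<in>orbit G m i x. z \<noteq> x" by (rule card_ge2)
  qed
  fix g assume g: "g \<in> G" "src g \<noteq> rng g"
  have "openin (subtopology T U0) U0" using openin_topspace[of "subtopology T U0"] top_U0 by metis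
  then obtain U where "full_bisection T G m i U" "g \<in> U" "compact_support T G m i (bisect_map G m i U)"
    using transposition[OF g(1) g(2) \<open>openin (subtopology T U0) U0\<close> src_U0[OF g(1)] rng_U0[OF g(1)]] by blast
  then show "\<exists>U. full_bisection T G m i U \<and> g \<in> U \<and> bisect_map G m i U \<in> full_group T G m i"
    using fg_intro by blast
qed

lemma inv_M: assumes "t \<in> full_group T G m i" "t \<circ> t = id"
  shows "inv\<^bsub>full_group_str T G m i\<^esub> t = t"
  unfolding m_inv_def full_group_str_def
  apply simp
  apply (rule the_equality)
  using assms apply simp
proof -
  fix y assume "y \<in> full_group T G m i \<and> t \<circ> y = id \<and> y \<circ> t = id"
  then have "t \<circ> y = id" by simp
  then have "t \<circ> (t \<circ> y) = t" by simp
  then have "(t \<circ> t) \<circ> y = t" by (simp add: comp_assoc)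
  then show "y = t" using assms(2) by simp
qed

lemma D_comm: assumes "t1 \<in> full_group T G m i" "t1 \<circ> t1 = id" "t2 \<in> full_group T G m i" "t2 \<circ> t2 = id"
  shows "t1 \<circ> (t2 \<circ> (t1 \<circ> t2)) \<in> full_group_commutator T G m i"
proof -
  let ?M = "full_group_str T G m i"
  have "t1 \<otimes>\<^bsub>?M\<^esub> t2 \<otimes>\<^bsub>?M\<^esub> (inv\<^bsub>?M\<^esub> t1) \<otimes>\<^bsub>?M\<^esub> (inv\<^bsub>?M\<^esub> t2) \<in> derived_set ?M (carrier ?M)"
    using assms by (auto simp: full_group_str_def)
  moreover have "t1 \<otimes>\<^bsub>?M\<^esub> t2 \<otimes>\<^bsub>?M\<^esub> (inv\<^bsub>?M\<^esub> t1) \<otimes>\<^bsub>?M\<^esub> (inv\<^bsub>?M\<^esub> t2) = t1 \<circ> (t2 \<circ> (t1 \<circ> t2))"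
    using inv_M assms by (simp add: full_group_str_def o_assoc)
  ultimately have "t1 \<circ> (t2 \<circ> (t1 \<circ> t2)) \<in> derived_set ?M (carrier ?M)" by simp
  then show ?thesis unfolding full_group_commutator_def derived_def
    by (rule generate.incl)
qed

lemma D_comp: "f \<in> full_group_commutator T G m i \<Longrightarrow> h \<in> full_group_commutator T G m i \<Longrightarrow>
   f \<circ> h \<in> full_group_commutator T G m i"
  unfolding full_group_commutator_def derived_def
  using generate.eng[of f "full_group_str T G m i" _ h] by (simp add: full_group_str_def)

lemma part2: assumes "\<forall>x\<in>U0. card_ge (orbit G m i x) 3"
  shows "covers T G m i (full_group_commutator T G m i)"
proof (rule cover_gen)
  show "\<And>f h. f \<in> full_group_commutator T G m i \<Longrightarrow> h \<in> full_group_commutator T G m i \<Longrightarrow> f \<circ> h \<in> full_group_commutator T G m i"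
    by (rule D_comp)
  show "\<And>x. x \<in> U0 \<Longrightarrow> \<exists>z\<in>orbit G m i x. z \<noteq> x"
  proof -
    fix x assume "x \<in> U0"
    then have "card_ge (orbit G m i x) 3" using assms by simp
    then have "\<exists>z\<in>orbit G m i x. z \<noteq> x \<and> z \<noteq> x" by (rule card_ge3)
    then show "\<exists>z\<in>orbit G m i x. z \<noteq> x" by simp
  qed
  fix g assume g: "g \<in> G" "src g \<noteq> rng g"
  define x where "x = src g"
  define y where "y = rng g"
  have "x \<in> U0" unfolding x_def by (rule src_U0[OF g(1)])
  then have "card_ge (orbit G m i x) 3" using assms by blast
  then have "\<exists>z\<in>orbit G m i x. z \<noteq> x \<and> z \<noteq> y" by (rule card_ge3)
  then obtain z where z: "z \<in> orbit G m i x" "z \<noteq> x" "z \<noteq> y" by blast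
  have "z \<in> {rng g | g. g \<in> G \<and> src g = x}" using z(1) unfolding orbit_def .
  then obtain k where k: "k \<in> G" "src k = x" "z = rng k" by blast
  have zU: "z \<in> U0" using k rng_U0 by simp
  have c1: "src k = rng (i g)" using k g rng_inv by (simp add: x_def)
  define h where "h = m k (i g)"
  have h: "h \<in> G" "src h = y" "rng h = z"
    using mult_ax(1-3)[OF k(1) inv_G[OF g(1)] c1] src_inv g k by (auto simp: h_def y_def)
  have top: "openin (subtopology T U0) U0" using openin_topspace[of "subtopology T U0"] top_U0 by metis
  have "closedin (subtopology T U0) {z}"
    using Hausdorff_imp_t1_space[OF haus] zU unfolding t1_space_closedin_singleton top_U0 by blast
  then have Ob: "openin (subtopology T U0) (U0 - {z})"
    unfolding closedin_def top_U0 by simp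
  obtain A where A: "full_bisection T G m i A" "g \<in> A" "\<forall>a\<in>A. i a \<in> A"
    "compact_support T G m i (bisect_map G m i A)" "U0 - (U0 - {z}) \<subseteq> A"
  proof -
    have "src g \<in> U0 - {z}" "rng g \<in> U0 - {z}" using src_U0 rng_U0 g z by (auto simp: x_def y_def)
    then show ?thesis using transposition[OF g Ob] that by blast
  qed
  have hne: "src h \<noteq> rng h" using h z by simp
  obtain C where C: "full_bisection T G m i C" "h \<in> C" "\<forall>a\<in>C. i a \<in> C"
    "compact_support T G m i (bisect_map G m i C)"
    using transposition[OF h(1) hne top src_U0[OF h(1)] rng_U0[OF h(1)]] by blast
  have zA: "z \<in> A" using A(5) zU by auto
  let ?t1 = "bisect_map G m i A" and ?t2 = "bisect_map G m i C"
  have t1: "?t1 \<in> full_group T G m i" "?t1 \<circ> ?t1 = id" using fg_intro A bm_invol by auto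
  have t2: "?t2 \<in> full_group T G m i" "?t2 \<circ> ?t2 = id" using fg_intro C bm_invol by auto
  define P where "P = bprod C (bprod A (bprod C A))"
  have fCA: "full_bisection T G m i (bprod C A)" by (rule bprod_fb(1)[OF C(1) A(1)])
  have fACA: "full_bisection T G m i (bprod A (bprod C A))" by (rule bprod_fb(1)[OF A(1) fCA])
  have fbP: "full_bisection T G m i P" unfolding P_def by (rule bprod_fb(1)[OF C(1) fACA])
  have mP: "bisect_map G m i P = ?t2 \<circ> (?t1 \<circ> (?t2 \<circ> ?t1))" unfolding P_def
    by (simp add: bprod_fb(2)[OF C(1) fACA] bprod_fb(2)[OF A(1) fCA] bprod_fb(2)[OF C(1) A(1)])
  have c2: "src h = rng g" using h by (simp add: y_def)
  have hg: "m h g \<in> G" "src (m h g) = x" "rng (m h g) = z" using mult_ax(1-3)[OF h(1) g(1) c2] h by (auto simp: x_def)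
  have "m h g \<in> bprod C A" by (rule bprod_mem[OF C(2) A(2) c2])
  moreover have c3: "src z = rng (m h g)" using hg unit_props[OF zU] by simp
  ultimately have "m z (m h g) \<in> bprod A (bprod C A)" using bprod_mem[OF zA] by blast
  moreover have "m z (m h g) = m h g" using left_unit[OF hg(1)] hg by simp
  ultimately have e1: "m h g \<in> bprod A (bprod C A)" by simp
  have ih: "i h \<in> C" "src (i h) = rng (m h g)" using C(3) C(2) src_inv h hg by auto
  have "m (i h) (m h g) \<in> P" unfolding P_def by (rule bprod_mem[OF ih(1) e1 ih(2)])
  moreover have "m (i h) (m h g) = g" using mult_ax(4)[OF h(1) g(1) c2] .
  ultimately have gP: "g \<in> P" by simp
  have "bisect_map G m i P \<in> full_group_commutator T G m i"
    unfolding mP by (rule D_comm[OF t2 t1])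
  then show "\<exists>U. full_bisection T G m i U \<and> g \<in> U \<and> bisect_map G m i U \<in> full_group_commutator T G m i"
    using fbP gP by blast
qed

end

theorem lemma4p8:
  fixes T :: "'g topology" and G :: "'g set" and m :: "'g \<Rightarrow> 'g \<Rightarrow> 'g" and i :: "'g \<Rightarrow> 'g"
  assumes "ample T G m i" and "effective T G m i"
  shows "((\<forall>x\<in>units G m i. card_ge (orbit G m i x) 2) \<longrightarrow> covers T G m i (full_group T G m i))
       \<and> ((\<forall>x\<in>units G m i. card_ge (orbit G m i x) 3) \<longrightarrow> covers T G m i (full_group_commutator T G m i))"
proof -
  interpret agpd T G m i by (rule agpd.intro[OF assms(1)])
  show ?thesis by (intro conjI impI part1 part2)
qed

end
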